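(* Let $m,p,n$ be positive integers with $p\mid m$. Any two distinct $p$-connected elements of $G(m,p,n)$ are incomparable in the codimension order.
   Context: $\zeta_m=e^{2\pi i/m}$. $G(m,1,n)$ is the group of $n\times n$ monomial matrices whose nonzero entries are $m$-th roots of unity, acting on $V=\mathbb{C}^n$; for $p\mid m$, $G(m,p,n)$ is the subgroup of those elements whose nonzero entries multiply to an $(m/p)$-th root of unity. $\operatorname{codim}(g)=n-\dim\{v\in V:gv=v\}$, and the codimension order is $a\le_\perp c$ iff $\operatorname{codim}(a)+\operatorname{codim}(a^{-1}c)=\operatorname{codim}(c)$. A diagonal matrix $g\ne 1$ in $G(m,1,n)$ whose non-1 eigenvalues (with multiplicity) are $\zeta_m^{c_1},\dots,\zeta_m^{c_k}$ is called $p$-connected if $p$ divides $c_1+\dots+c_k$ but $p$ does not divide $\sum_{i\in I}c_i$ for any nonempty proper subset $I\subsetneq\{1,\dots,k\}$ (the exponents are defined mod $m$, and $p\mid m$, so this is well defined). *)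

theory Defs
  imports "Jordan_Normal_Form.Matrix_Kernel" "Jordan_Normal_Form.Gauss_Jordan_Elimination"
begin

definition zeta :: "nat \<Rightarrow> complex" where
  "zeta m = cis (2 * pi / real m)"

definition G_m1n :: "nat \<Rightarrow> nat \<Rightarrow> complex mat set" where
  "G_m1n m n = {g \<in> carrier_mat n n.
      (\<forall>i<n. \<exists>!j. j < n \<and> g $$ (i,j) \<noteq> 0) \<and>
      (\<forall>j<n. \<exists>!i. i < n \<and> g $$ (i,j) \<noteq> 0) \<and>
      (\<forall>i<n. \<forall>j<n. g $$ (i,j) \<noteq> 0 \<longrightarrow> g $$ (i,j) ^ m = 1)}"

definition nonzero_entry_prod :: "complex mat \<Rightarrow> complex" where
  "nonzero_entry_prod g =
     (\<Prod>ij \<in> {ij \<in> {0..<dim_row g} \<times> {0..<dim_col g}. g $$ ij \<noteq> 0}. g $$ ij)"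

definition G_mpn :: "nat \<Rightarrow> nat \<Rightarrow> nat \<Rightarrow> complex mat set" where
  "G_mpn m p n = {g \<in> G_m1n m n. nonzero_entry_prod g ^ (m div p) = 1}"

text \<open>codim g = n - dim {v. g v = v}; the fixed space is the kernel of g - 1.\<close>
definition codim :: "complex mat \<Rightarrow> nat" where
  "codim g = dim_row g - kernel_dim (g - 1\<^sub>m (dim_row g))"

definition codim_le :: "complex mat \<Rightarrow> complex mat \<Rightarrow> bool" where
  "codim_le a c \<longleftrightarrow> codim a + codim (the (mat_inverse a) * c) = codim c"

definition p_connected :: "nat \<Rightarrow> nat \<Rightarrow> complex mat \<Rightarrow> bool" where
  "p_connected m p g \<longleftrightarrow>
     (let S = {i. i < dim_row g \<and> g $$ (i,i) \<noteq> 1} in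
      diagonal_mat g \<and> g \<noteq> 1\<^sub>m (dim_row g) \<and>
      (\<exists>c :: nat \<Rightarrow> nat.
          (\<forall>i\<in>S. g $$ (i,i) = zeta m ^ c i) \<and>
          p dvd (\<Sum>i\<in>S. c i) \<and>
          (\<forall>I. I \<noteq> {} \<longrightarrow> I \<subset> S \<longrightarrow> \<not> p dvd (\<Sum>i\<in>I. c i))))"

end

theory Submission imports Defs begin

lemma diag_mult_vec:
  fixes D :: "'a::field mat"
  assumes D: "D \<in> carrier_mat n n" and dg: "diagonal_mat D"
    and v: "v \<in> carrier_vec n" and i: "i < n"
  shows "(D *\<^sub>v v) $ i = D $$ (i,i) * v $ i"
proof -
  have "(D *\<^sub>v v) $ i = (\<Sum>j\<in>{0..<n}. D $$ (i,j) * v $ j)"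
    using D v i by (auto simp: scalar_prod_def)
  also have "\<dots> = (\<Sum>j\<in>{0..<n}. if j = i then D $$ (i,i) * v $ i else 0)"
    using dg D i by (intro sum.cong) (auto simp: diagonal_mat_def)
  also have "\<dots> = D $$ (i,i) * v $ i" using i by simp
  finally show ?thesis .
qed

lemma kernel_dim_diag:
  fixes D :: "'a::field mat"
  assumes D: "D \<in> carrier_mat n n" and dg: "diagonal_mat D"
  shows "kernel_dim D = card {i. i < n \<and> D $$ (i,i) = 0}"
proof -
  interpret K: kernel n n D by unfold_locales (rule D)
  define Z where "Z = {i. i < n \<and> D $$ (i,i) = 0}"
  define B :: "'a vec set" where "B = unit_vec n ` Z"
  have Bk: "B \<subseteq> mat_kernel D"
  proof
    fix u assume "u \<in> B"
    then obtain i where i: "i \<in> Z" and u: "u = unit_vec n i" unfolding B_def by auto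
    show "u \<in> mat_kernel D" unfolding u
    proof (rule mat_kernelI[OF D])
      show "D *\<^sub>v unit_vec n i = 0\<^sub>v n"
      proof (rule eq_vecI)
        fix j assume "j < dim_vec (0\<^sub>v n :: 'a vec)"
        hence j: "j < n" by simp
        have "(D *\<^sub>v unit_vec n i) $ j = D $$ (j,j) * unit_vec n i $ j"
          by (rule diag_mult_vec[OF D dg _ j]) simp
        thus "(D *\<^sub>v unit_vec n i) $ j = 0\<^sub>v n $ j" using i j unfolding Z_def by (cases "j = i") auto
      qed (use D in auto)
    qed auto
  qed
  have finB: "finite B" unfolding B_def Z_def by auto
  have inj: "inj_on (unit_vec n :: nat \<Rightarrow> 'a vec) Z" unfolding Z_def inj_on_def
    by (auto simp: unit_vec_eq)
  have sub: "B \<subseteq> set (unit_vecs n)" unfolding B_def Z_def unit_vecs_def by auto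
  have li: "\<not> K.lin_dep B"
    unfolding K.lindep_same[OF Bk]
    using K.NC.subset_li_is_li[OF _ sub] K.NC.unit_vecs_basis unfolding K.NC.basis_def by auto
  have span: "K.span B = mat_kernel D"
  proof
    show "K.span B \<subseteq> mat_kernel D" using K.Ker.span_closed Bk by auto
  next
    show "mat_kernel D \<subseteq> K.span B"
    proof
      fix v assume vk: "v \<in> mat_kernel D"
      have vc: "v \<in> carrier_vec n" using vk mat_kernel[OF D] by auto
      have Dv: "D *\<^sub>v v = 0\<^sub>v n" using mat_kernelD[OF D vk] by simp
      define a where "a = (\<lambda>u::'a vec. v $ (THE i. u = unit_vec n i))"
      have lc: "K.NC.lincomb a B = v"
      proof (rule eq_vecI)
        have Bc: "B \<subseteq> carrier_vec n" unfolding B_def by auto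
        show "dim_vec (K.NC.lincomb a B) = dim_vec v" using K.NC.lincomb_dim[OF finB Bc] vc by simp
        fix i assume "i < dim_vec v"
        hence i: "i < n" using vc by auto
        have "K.NC.lincomb a B $ i = (\<Sum>x\<in>B. a x * x $ i)" by (rule K.NC.lincomb_index[OF i Bc])
        also have "\<dots> = (\<Sum>j\<in>Z. a (unit_vec n j) * unit_vec n j $ i)"
          unfolding B_def by (rule sum.reindex[OF inj, unfolded comp_def])
        also have "\<dots> = (\<Sum>j\<in>Z. if j = i then v $ i else 0)"
        proof (rule sum.cong[OF refl])
          fix j assume j: "j \<in> Z"
          have "(THE k. unit_vec n j = (unit_vec n k :: 'a vec)) = j"
            using j unfolding Z_def by (intro the_equality) (auto simp: unit_vec_eq)
          thus "a (unit_vec n j) * unit_vec n j $ i = (if j = i then v $ i else 0)"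
            using i j unfolding a_def Z_def by auto
        qed
        also have "\<dots> = v $ i"
        proof (cases "i \<in> Z")
          case False
          have "D $$ (i,i) * v $ i = 0" using diag_mult_vec[OF D dg vc i] Dv i by simp
          hence "v $ i = 0" using False i unfolding Z_def by auto
          thus ?thesis using False by simp
        qed (simp add: Z_def)
        finally show "K.NC.lincomb a B $ i = v $ i" .
      qed
      have "v \<in> K.NC.span B" unfolding K.NC.span_def using finB lc by blast
      thus "v \<in> K.span B" using K.span_same[OF Bk] by simp
    qed
  qed
  have "K.basis B" unfolding K.Ker.basis_def using li span Bk by auto
  hence "K.dim = card B" using K.Ker.dim_basis[OF finB] by simp
  also have "\<dots> = card Z" unfolding B_def by (rule card_image[OF inj])
  finally show ?thesis using K.kernel_dim Z_def by simp
qed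

lemma diag_mult_left:
  fixes D B :: "'a::field mat"
  assumes D: "D \<in> carrier_mat n n" and dg: "diagonal_mat D" and B: "B \<in> carrier_mat n k"
    and i: "i < n" and j: "j < k"
  shows "(D * B) $$ (i,j) = D $$ (i,i) * B $$ (i,j)"
proof -
  have "(D * B) $$ (i,j) = (\<Sum>l\<in>{0..<n}. D $$ (i,l) * B $$ (l,j))"
    using D B i j by (auto simp: scalar_prod_def)
  also have "\<dots> = (\<Sum>l\<in>{0..<n}. if l = i then D $$ (i,i) * B $$ (i,j) else 0)"
    using dg D i by (intro sum.cong) (auto simp: diagonal_mat_def)
  also have "\<dots> = D $$ (i,i) * B $$ (i,j)" using i by simp
  finally show ?thesis .
qed

lemma diag_mult_right:
  fixes D B :: "'a::field mat"
  assumes D: "D \<in> carrier_mat n n" and dg: "diagonal_mat D" and B: "B \<in> carrier_mat k n"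
    and i: "i < k" and j: "j < n"
  shows "(B * D) $$ (i,j) = B $$ (i,j) * D $$ (j,j)"
proof -
  have "(B * D) $$ (i,j) = (\<Sum>l\<in>{0..<n}. B $$ (i,l) * D $$ (l,j))"
    using D B i j by (auto simp: scalar_prod_def)
  also have "\<dots> = (\<Sum>l\<in>{0..<n}. if l = j then B $$ (i,j) * D $$ (j,j) else 0)"
    using dg D j by (intro sum.cong) (auto simp: diagonal_mat_def)
  also have "\<dots> = B $$ (i,j) * D $$ (j,j)" using j by simp
  finally show ?thesis .
qed

lemma codim_diag:
  fixes g :: "complex mat"
  assumes g: "g \<in> carrier_mat n n" and dg: "diagonal_mat g"
  shows "codim g = card {i. i < n \<and> g $$ (i,i) \<noteq> 1}"
proof -
  have gm: "g - 1\<^sub>m n \<in> carrier_mat n n" using g by auto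
  have dgm: "diagonal_mat (g - 1\<^sub>m n)" using g dg unfolding diagonal_mat_def by auto
  have "kernel_dim (g - 1\<^sub>m n) = card {i. i < n \<and> (g - 1\<^sub>m n) $$ (i,i) = 0}"
    by (rule kernel_dim_diag[OF gm dgm])
  also have "{i. i < n \<and> (g - 1\<^sub>m n) $$ (i,i) = 0} = {i. i < n \<and> g $$ (i,i) = 1}"
    using g by auto
  finally have kd: "kernel_dim (g - 1\<^sub>m n) = card {i. i < n \<and> g $$ (i,i) = 1}" .
  have "{i. i < n \<and> g $$ (i,i) \<noteq> 1} = {0..<n} - {i. i < n \<and> g $$ (i,i) = 1}" by auto
  hence "card {i. i < n \<and> g $$ (i,i) \<noteq> 1} = n - card {i. i < n \<and> g $$ (i,i) = 1}"
    by (simp add: card_Diff_subset subset_eq)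
  thus ?thesis unfolding codim_def using g kd by simp
qed

lemma inverse_diag:
  fixes a :: "complex mat"
  assumes a: "a \<in> carrier_mat n n" and dg: "diagonal_mat a" and nz: "\<forall>i<n. a $$ (i,i) \<noteq> 0"
  shows "the (mat_inverse a) = mat n n (\<lambda>(i,j). if i = j then inverse (a $$ (i,i)) else 0)"
proof -
  define ai where "ai = mat n n (\<lambda>(i,j). if i = j then inverse (a $$ (i,i)) else (0::complex))"
  have aic: "ai \<in> carrier_mat n n" unfolding ai_def by auto
  have l: "a * ai = 1\<^sub>m n"
  proof (rule eq_matI)
    fix i j assume ij: "i < dim_row (1\<^sub>m n :: complex mat)" "j < dim_col (1\<^sub>m n :: complex mat)"
    hence "(a * ai) $$ (i,j) = a $$ (i,i) * ai $$ (i,j)" using diag_mult_left[OF a dg aic] by simp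
    thus "(a * ai) $$ (i,j) = 1\<^sub>m n $$ (i,j)" using ij nz unfolding ai_def by auto
  qed (use a aic in auto)
  have r: "ai * a = 1\<^sub>m n"
  proof (rule eq_matI)
    fix i j assume ij: "i < dim_row (1\<^sub>m n :: complex mat)" "j < dim_col (1\<^sub>m n :: complex mat)"
    hence "(ai * a) $$ (i,j) = ai $$ (i,j) * a $$ (j,j)" using diag_mult_right[OF a dg aic] by simp
    thus "(ai * a) $$ (i,j) = 1\<^sub>m n $$ (i,j)" using ij nz unfolding ai_def by auto
  qed (use a aic in auto)
  show ?thesis
  proof (cases "mat_inverse a")
    case None
    from mat_inverse(1)[OF a None, of undefined] aic l r show ?thesis
      by (auto simp: Units_def ring_mat_def a)
  next
    case (Some B)
    from mat_inverse(2)[OF a Some] have B: "B \<in> carrier_mat n n" "a * B = 1\<^sub>m n" "B * a = 1\<^sub>m n" by auto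
    have "B = B * (a * ai)" using l B by simp
    also have "\<dots> = (B * a) * ai" by (rule assoc_mult_mat[symmetric, OF B(1) a aic])
    also have "\<dots> = ai" using B aic by simp
    finally show ?thesis using Some ai_def by simp
  qed
qed

lemma zeta_pow_mod:
  assumes m: "m > 0"
  shows "zeta m ^ k = cis (2 * pi * real (k mod m) / real m)"
proof -
  have "zeta m ^ k = cis (real k * (2 * pi / real m))" by (simp add: zeta_def DeMoivre)
  also have "real k * (2 * pi / real m) = 2 * pi * real (k div m) + 2 * pi * real (k mod m) / real m"
  proof -
    have "real k = real (k div m) * real m + real (k mod m)"
      by (metis div_mult_mod_eq of_nat_add of_nat_mult)
    thus ?thesis using m by (simp add: field_simps)
  qed
  also have "cis (2 * pi * real (k div m) + 2 * pi * real (k mod m) / real m)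
      = cis (2 * pi * real (k div m)) * cis (2 * pi * real (k mod m) / real m)"
    by (rule cis_mult[symmetric])
  also have "cis (2 * pi * real (k div m)) = 1"
    by (rule cis_multiple_2pi) (metis Ints_of_nat)
  finally show ?thesis by simp
qed

lemma zeta_pow_eq:
  assumes m: "m > 0" and e: "zeta m ^ x = zeta m ^ y"
  shows "x mod m = y mod m"
proof -
  have inj: "inj_on (\<lambda>k. cis (2 * pi * real k / real m)) {..<m}"
    using bij_betw_roots_unity[OF m] unfolding bij_betw_def by blast
  have "cis (2 * pi * real (x mod m) / real m) = cis (2 * pi * real (y mod m) / real m)"
    using e zeta_pow_mod[OF m] by metis
  thus ?thesis using inj m unfolding inj_on_def by auto
qed

lemma pcD:
  assumes "p_connected m p g"
  shows "diagonal_mat g \<and> g \<noteq> 1\<^sub>m (dim_row g) \<and>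
    (\<exists>c :: nat \<Rightarrow> nat.
          (\<forall>i\<in>{i. i < dim_row g \<and> g $$ (i,i) \<noteq> 1}. g $$ (i,i) = zeta m ^ c i) \<and>
          p dvd (\<Sum>i\<in>{i. i < dim_row g \<and> g $$ (i,i) \<noteq> 1}. c i) \<and>
          (\<forall>I. I \<noteq> {} \<longrightarrow> I \<subset> {i. i < dim_row g \<and> g $$ (i,i) \<noteq> 1} \<longrightarrow> \<not> p dvd (\<Sum>i\<in>I. c i)))"
  using assms unfolding p_connected_def Let_def .

lemma one_dir:
  fixes m p n :: nat and a c :: "complex mat"
  assumes m: "m > 0" and pm: "p dvd m"
    and aG: "a \<in> G_mpn m p n" and cG: "c \<in> G_mpn m p n"
    and pa: "p_connected m p a" and pc: "p_connected m p c"
    and ne: "a \<noteq> c" and le: "codim_le a c"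
  shows False
proof -
  have aG': "a \<in> G_m1n m n" and cG': "c \<in> G_m1n m n" using aG cG unfolding G_mpn_def by blast+
  have a: "a \<in> carrier_mat n n" and c: "c \<in> carrier_mat n n"
    using aG' cG' unfolding G_m1n_def by blast+
  have dima: "dim_row a = n" and dimc: "dim_row c = n" using a c by auto
  have da: "diagonal_mat a" and dc: "diagonal_mat c"
    using pcD[OF pa, THEN conjunct1] pcD[OF pc, THEN conjunct1] .
  have a1: "a \<noteq> 1\<^sub>m n" using pcD[OF pa, THEN conjunct2, THEN conjunct1] unfolding dima .
  have nz: "\<forall>i<n. a $$ (i,i) \<noteq> 0"
  proof (intro allI impI)
    fix i assume i: "i < n"
    from aG' have "\<forall>i<n. \<exists>!j. j < n \<and> a $$ (i,j) \<noteq> 0" unfolding G_m1n_def mem_Collect_eq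
      by (elim conjE) assumption
    hence "\<exists>!j. j < n \<and> a $$ (i,j) \<noteq> 0" using i by blast
    then obtain j where j: "j < n" "a $$ (i,j) \<noteq> 0" by blast
    with da a i have "j = i" unfolding diagonal_mat_def by auto
    with j show "a $$ (i,i) \<noteq> 0" by simp
  qed
  define ai where "ai = mat n n (\<lambda>(i,j). if i = j then inverse (a $$ (i,i)) else (0::complex))"
  have aic: "ai \<in> carrier_mat n n" unfolding ai_def by auto
  have dai: "diagonal_mat ai" unfolding ai_def diagonal_mat_def by auto
  have inv: "the (mat_inverse a) = ai" unfolding ai_def by (rule inverse_diag[OF a da nz])
  define e where "e = ai * c"
  have ec: "e \<in> carrier_mat n n" unfolding e_def using aic c by auto
  have eij: "\<And>i j. i < n \<Longrightarrow> j < n \<Longrightarrow> e $$ (i,j) = ai $$ (i,i) * c $$ (i,j)"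
    unfolding e_def by (rule diag_mult_left[OF aic dai c])
  have de: "diagonal_mat e" unfolding diagonal_mat_def
  proof (intro allI impI)
    fix i j assume "i < dim_row e" "j < dim_col e" "i \<noteq> j"
    hence ij: "i < n" "j < n" "i \<noteq> j" using ec by auto
    have "c $$ (i,j) = 0" using dc c ij unfolding diagonal_mat_def by auto
    thus "e $$ (i,j) = 0" using eij[OF ij(1,2)] by simp
  qed
  define Sa where "Sa = {i. i < n \<and> a $$ (i,i) \<noteq> 1}"
  define Sc where "Sc = {i. i < n \<and> c $$ (i,i) \<noteq> 1}"
  define D where "D = {i. i < n \<and> c $$ (i,i) \<noteq> a $$ (i,i)}"
  have eD: "{i. i < n \<and> e $$ (i,i) \<noteq> 1} = D"
  proof -
    { fix i assume i: "i < n"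
      have "e $$ (i,i) = c $$ (i,i) / a $$ (i,i)" using eij[OF i i] i unfolding ai_def
        by (simp add: field_simps)
      hence "e $$ (i,i) \<noteq> 1 \<longleftrightarrow> c $$ (i,i) \<noteq> a $$ (i,i)" using nz i by auto }
    thus ?thesis unfolding D_def by auto
  qed
  have card_eq: "card Sa + card D = card Sc"
    using le unfolding codim_le_def inv e_def[symmetric]
    unfolding codim_diag[OF a da] codim_diag[OF c dc] codim_diag[OF ec de] eD Sa_def Sc_def by simp
  have fin: "finite Sa" "finite D" "finite Sc" unfolding Sa_def D_def Sc_def by auto
  have sub: "Sc \<subseteq> Sa \<union> D" unfolding Sa_def Sc_def D_def by auto
  have "card Sc \<le> card (Sa \<union> D)" using sub fin by (intro card_mono) auto
  moreover have "card (Sa \<union> D) + card (Sa \<inter> D) = card Sa + card D"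
    using card_Un_Int[OF fin(1,2)] by simp
  ultimately have "card (Sa \<inter> D) = 0" and cU: "card Sc = card (Sa \<union> D)" using card_eq by auto
  hence disj: "Sa \<inter> D = {}" using fin by auto
  have ScU: "Sc = Sa \<union> D" using card_subset_eq[OF _ sub] cU fin by auto
  have agree: "\<And>i. i \<in> Sa \<Longrightarrow> c $$ (i,i) = a $$ (i,i)" using disj unfolding Sa_def D_def by auto
  have SaSc: "Sa \<subseteq> Sc" using ScU by auto
  have Sa_ne: "Sa \<noteq> {}"
  proof
    assume "Sa = {}"
    hence "a = 1\<^sub>m n" using a da unfolding Sa_def diagonal_mat_def by (intro eq_matI) auto
    thus False using a1 by simp
  qed
  have Sa_neq: "Sa \<noteq> Sc"
  proof
    assume "Sa = Sc"
    hence "D = {}" using ScU disj by auto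
    hence "a = c" using a c da dc unfolding D_def diagonal_mat_def
      by (intro eq_matI) (auto, metis)
    thus False using ne by simp
  qed
  from pcD[OF pc, THEN conjunct2, THEN conjunct2, unfolded dimc Sc_def[symmetric]] obtain cc :: "nat \<Rightarrow> nat" where
    cc1: "\<forall>i\<in>Sc. c $$ (i,i) = zeta m ^ cc i" and
    cc2: "\<forall>I. I \<noteq> {} \<longrightarrow> I \<subset> Sc \<longrightarrow> \<not> p dvd (\<Sum>i\<in>I. cc i)"
    by blast
  from pcD[OF pa, THEN conjunct2, THEN conjunct2, unfolded dima Sa_def[symmetric]] obtain ca :: "nat \<Rightarrow> nat" where
    ca1: "\<forall>i\<in>Sa. a $$ (i,i) = zeta m ^ ca i" and
    ca2: "p dvd (\<Sum>i\<in>Sa. ca i)"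
    by blast
  have ndvd: "\<not> p dvd (\<Sum>i\<in>Sa. cc i)" using cc2 Sa_ne SaSc Sa_neq by auto
  have modp: "cc i mod p = ca i mod p" if i: "i \<in> Sa" for i
  proof -
    have "zeta m ^ cc i = zeta m ^ ca i" using cc1 ca1 agree[OF i] i SaSc by (metis subsetD)
    hence "cc i mod m = ca i mod m" by (rule zeta_pow_eq[OF m])
    hence "cc i mod m mod p = ca i mod m mod p" by simp
    thus ?thesis using pm by (simp add: mod_mod_cancel)
  qed
  have "(\<Sum>i\<in>Sa. cc i) mod p = (\<Sum>i\<in>Sa. cc i mod p) mod p" by (simp add: mod_sum_eq)
  also have "\<dots> = (\<Sum>i\<in>Sa. ca i mod p) mod p" using modp by (simp cong: sum.cong)
  also have "\<dots> = (\<Sum>i\<in>Sa. ca i) mod p" by (simp add: mod_sum_eq)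
  also have "\<dots> = 0" using ca2 by simp
  finally show False using ndvd by auto
qed

theorem mainTheorem5:
  fixes m p n :: nat and a c :: "complex mat"
  assumes "m > 0" and "p > 0" and "n > 0" and "p dvd m"
    and "a \<in> G_mpn m p n" and "c \<in> G_mpn m p n"
    and "p_connected m p a" and "p_connected m p c"
    and "a \<noteq> c"
  shows "\<not> codim_le a c \<and> \<not> codim_le c a"
  using one_dir[OF assms(1,4,5,6,7,8,9)] one_dir[OF assms(1,4,6,5,8,7) assms(9)[symmetric]] by blast

end
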